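(* Let $\{V_0(n)\}_{n\in\mathbb{Z}}$, $\{V_1(n)\}_{n\in\mathbb{Z}}$ be real-valued sequences and $\{f_1(n)\}_{n\in\mathbb{Z}}$ a sequence. Consider the operators on complex-valued sequences $\ell(\mathbb{Z};\mathbb{C})$ $$H_0=-\bigtriangleup^2+V_0(n),\qquad H_1=-\bigtriangleup^2+V_1(n),$$ $$\big(A_1^{(n)}\big)^+=-\bigtriangleup+f_1(n),\qquad \big(A_1^{(n+2)}\big)^+=-\bigtriangleup+f_1(n+2),$$ where $V_0(n)$, $V_1(n)$, $f_1(n)$, $f_1(n+2)$ act as multiplication operators (i.e. $(f_1(n+2)\psi)(n)=f_1(n+2)\psi(n)$). If the operator identity $$H_1\big(A_1^{(n)}\big)^+=\big(A_1^{(n+2)}\big)^+H_0$$ holds on $\ell(\mathbb{Z};\mathbb{C})$, then for all $n$ $$V_1(n)=V_0(n+1)-2\bigtriangleup f_1(n+1),$$ $$-\bigtriangleup^2 f_1(n)+\bigtriangleup V_0(n)-2f_1(n)\bigtriangleup f_1(n+1)=-f_1(n)V_0(n+1)+f_1(n+2)V_0(n).$$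
   Context: For a sequence $\psi:\mathbb{Z}\to\mathbb{C}$, the forward difference is $\bigtriangleup\psi(n)=\psi(n+1)-\psi(n)$ and $\bigtriangleup^2\psi(n)=\psi(n+2)-2\psi(n+1)+\psi(n)$. *)

theory Defs
  imports Complex_Main
begin

definition fdiff :: "(int \<Rightarrow> 'a::ring_1) \<Rightarrow> int \<Rightarrow> 'a" where
  "fdiff \<psi> n = \<psi> (n + 1) - \<psi> n"

definition fdiff2 :: "(int \<Rightarrow> 'a::ring_1) \<Rightarrow> int \<Rightarrow> 'a" where
  "fdiff2 \<psi> n = \<psi> (n + 2) - 2 * \<psi> (n + 1) + \<psi> n"

definition schr_op :: "(int \<Rightarrow> real) \<Rightarrow> (int \<Rightarrow> complex) \<Rightarrow> (int \<Rightarrow> complex)" where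
  "schr_op V \<psi> = (\<lambda>n. - fdiff2 \<psi> n + complex_of_real (V n) * \<psi> n)"

definition aplus_op :: "(int \<Rightarrow> complex) \<Rightarrow> (int \<Rightarrow> complex) \<Rightarrow> (int \<Rightarrow> complex)" where
  "aplus_op g \<psi> = (\<lambda>n. - fdiff \<psi> n + g n * \<psi> n)"

end

theory Submission
  imports Defs
begin

theorem theorem1:
  fixes V0 V1 :: "int \<Rightarrow> real" and f1 :: "int \<Rightarrow> complex"
  assumes "\<forall>\<psi> :: int \<Rightarrow> complex.
             schr_op V1 (aplus_op f1 \<psi>) = aplus_op (\<lambda>n. f1 (n + 2)) (schr_op V0 \<psi>)"
  shows "(\<forall>n. complex_of_real (V1 n) = complex_of_real (V0 (n + 1)) - 2 * fdiff f1 (n + 1))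
    \<and> (\<forall>n. - fdiff2 f1 n + fdiff (\<lambda>k. complex_of_real (V0 k)) n - 2 * f1 n * fdiff f1 (n + 1)
             = - f1 n * complex_of_real (V0 (n + 1)) + f1 (n + 2) * complex_of_real (V0 n))"
proof -
  have E: "schr_op V1 (aplus_op f1 \<psi>) n = aplus_op (\<lambda>n. f1 (n + 2)) (schr_op V0 \<psi>) n"
    for \<psi> n using assms by simp
  have A: "complex_of_real (V1 n) = complex_of_real (V0 (n + 1)) - 2 * fdiff f1 (n + 1)" for n
  proof -
    have "schr_op V1 (aplus_op f1 (\<lambda>k. if k = n + 1 then 1 else 0)) n
        = aplus_op (\<lambda>n. f1 (n + 2)) (schr_op V0 (\<lambda>k. if k = n + 1 then 1 else 0)) n"
      by (rule E)
    then show ?thesis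
      by (simp add: schr_op_def aplus_op_def fdiff_def fdiff2_def algebra_simps)
  qed
  have B: "- fdiff2 f1 n + fdiff (\<lambda>k. complex_of_real (V0 k)) n - 2 * f1 n * fdiff f1 (n + 1)
             = - f1 n * complex_of_real (V0 (n + 1)) + f1 (n + 2) * complex_of_real (V0 n)" for n
  proof -
    have "schr_op V1 (aplus_op f1 (\<lambda>k. if k = n then 1 else 0)) n
        = aplus_op (\<lambda>n. f1 (n + 2)) (schr_op V0 (\<lambda>k. if k = n then 1 else 0)) n"
      by (rule E)
    then have "(complex_of_real (V1 n) - 1) * (1 + f1 n) = (1 + f1 (n+2)) * (complex_of_real (V0 n) - 1)"
      by (simp add: schr_op_def aplus_op_def fdiff_def fdiff2_def algebra_simps)
    then show ?thesis using A[of n]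
      by (simp add: fdiff_def fdiff2_def algebra_simps)
  qed
  show ?thesis using A B by blast
qed

end
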